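(* Let $M$ be a finite-dimensional von Neumann algebra and let $D:M\to M$ be an additive derivation. Then $D$ can be uniquely represented as $D=D_a+D_\delta$, where $D_a(x)=ax-xa$ is the inner derivation implemented by some $a\in M$, and $D_\delta$ is the additive derivation defined below from the restriction $\delta$ of $D$ to the center $Z(M)$.
   Context: An additive derivation on a complex algebra $\mathcal A$ is an additive map $D:\mathcal A\to\mathcal A$ with $D(xy)=D(x)y+xD(y)$ for all $x,y$; such a $D$ maps the center $Z(\mathcal A)$ into itself. Construction of $D_\delta$: write $M$ via mutually orthogonal minimal central projections $z_1,\dots,z_k$ with $\sum_i z_i=\mathbf 1$ and $z_iM\cong M_{n_i}(\mathbb C)$. Let $\delta=D|_{Z(M)}$; since $\delta(zx)=z\delta(x)$ for central projections $z$, $\delta$ maps each $z_iZ(M)\cong\mathbb C$ into itself and thus induces an additive derivation $\delta_i:\mathbb C\to\mathbb C$. Fixing matrix units $e^{(i)}_{jl}$ ($1\le j,l\le n_i$) of $z_iM$, every $x\in M$ is uniquely $x=\sum_i\sum_{j,l}\lambda^{(i)}_{jl}e^{(i)}_{jl}$ with $\lambda^{(i)}_{jl}\in\mathbb C$, and $D_\delta(x)=\sum_i\sum_{j,l}\delta_i(\lambda^{(i)}_{jl})e^{(i)}_{jl}$. This $D_\delta$ is an additive derivation on $M$ whose restriction to $Z(M)$ is $\delta$. *)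

theory Defs
  imports Complex_Main
begin

text \<open>Concrete model of a finite-dimensional von Neumann algebra
  M = M_{n_0}(C) (+) ... (+) M_{n_{k-1}}(C).  An element is a function
  x i j l = (j,l)-entry of the i-th block, vanishing outside the blocks.\<close>

type_synonym fdvn = "nat \<Rightarrow> nat \<Rightarrow> nat \<Rightarrow> complex"

definition vna :: "nat \<Rightarrow> (nat \<Rightarrow> nat) \<Rightarrow> fdvn set" where
  "vna k n = {x. \<forall>i j l. \<not> (i < k \<and> j < n i \<and> l < n i) \<longrightarrow> x i j l = 0}"

definition vadd :: "fdvn \<Rightarrow> fdvn \<Rightarrow> fdvn" where
  "vadd x y = (\<lambda>i j l. x i j l + y i j l)"

definition vmult :: "(nat \<Rightarrow> nat) \<Rightarrow> fdvn \<Rightarrow> fdvn \<Rightarrow> fdvn" where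
  "vmult n x y = (\<lambda>i j l. \<Sum>m<n i. x i j m * y i m l)"

definition vscal :: "complex \<Rightarrow> fdvn \<Rightarrow> fdvn" where
  "vscal c x = (\<lambda>i j l. c * x i j l)"

definition cproj :: "(nat \<Rightarrow> nat) \<Rightarrow> nat \<Rightarrow> fdvn" where
  "cproj n i0 = (\<lambda>i j l. if i = i0 \<and> j = l \<and> j < n i then 1 else 0)"

definition inner_der :: "(nat \<Rightarrow> nat) \<Rightarrow> fdvn \<Rightarrow> fdvn \<Rightarrow> fdvn" where
  "inner_der n a x = (\<lambda>i j l. vmult n a x i j l - vmult n x a i j l)"

definition is_add_der :: "nat \<Rightarrow> (nat \<Rightarrow> nat) \<Rightarrow> (fdvn \<Rightarrow> fdvn) \<Rightarrow> bool" where
  "is_add_der k n D \<longleftrightarrow>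
     (\<forall>x\<in>vna k n. D x \<in> vna k n) \<and>
     (\<forall>x\<in>vna k n. \<forall>y\<in>vna k n. D (vadd x y) = vadd (D x) (D y)) \<and>
     (\<forall>x\<in>vna k n. \<forall>y\<in>vna k n.
        D (vmult n x y) = vadd (vmult n (D x) y) (vmult n x (D y)))"

definition is_cder :: "(complex \<Rightarrow> complex) \<Rightarrow> bool" where
  "is_cder g \<longleftrightarrow> (\<forall>a b. g (a + b) = g a + g b) \<and> (\<forall>a b. g (a * b) = g a * b + a * g b)"

definition delta_i :: "(nat \<Rightarrow> nat) \<Rightarrow> (fdvn \<Rightarrow> fdvn) \<Rightarrow> nat \<Rightarrow> complex \<Rightarrow> complex" where
  "delta_i n D i c = (THE d. D (vscal c (cproj n i)) = vscal d (cproj n i))"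

definition D_gam :: "nat \<Rightarrow> (nat \<Rightarrow> nat) \<Rightarrow> (nat \<Rightarrow> complex \<Rightarrow> complex) \<Rightarrow> fdvn \<Rightarrow> fdvn" where
  "D_gam k n g x = (\<lambda>i j l. if i < k \<and> j < n i \<and> l < n i then g i (x i j l) else 0)"

definition D_delta :: "nat \<Rightarrow> (nat \<Rightarrow> nat) \<Rightarrow> (fdvn \<Rightarrow> fdvn) \<Rightarrow> fdvn \<Rightarrow> fdvn" where
  "D_delta k n D = D_gam k n (delta_i n D)"

end

theory Submission
  imports Defs
begin

definition munit :: "nat \<Rightarrow> nat \<Rightarrow> nat \<Rightarrow> fdvn" where
  "munit i p q = (\<lambda>i' j l. if i' = i \<and> j = p \<and> l = q then 1 else 0)"

lemma munit_vna: "i < k \<Longrightarrow> p < n i \<Longrightarrow> q < n i \<Longrightarrow> munit i p q \<in> vna k n"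
  by (auto simp: vna_def munit_def)

lemma cproj_vna: "i < k \<Longrightarrow> cproj n i \<in> vna k n"
  by (auto simp: vna_def cproj_def)

lemma vscal_vna: "x \<in> vna k n \<Longrightarrow> vscal c x \<in> vna k n"
  by (auto simp: vna_def vscal_def)

lemma vadd_vna: "x \<in> vna k n \<Longrightarrow> y \<in> vna k n \<Longrightarrow> vadd x y \<in> vna k n"
  by (auto simp: vna_def vadd_def)

lemma zero_vna: "(\<lambda>i j l. 0) \<in> vna k n"
  by (auto simp: vna_def)

lemma vna_out: "x \<in> vna k n \<Longrightarrow> \<not> (i < k \<and> j < n i \<and> l < n i) \<Longrightarrow> x i j l = 0"
  by (auto simp: vna_def)

lemma mult_munit_right:
  "q < n i \<Longrightarrow> vmult n x (munit i q r) i' j l = (if i' = i \<and> l = r then x i j q else 0)"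
  by (auto simp: vmult_def munit_def if_distrib cong: if_cong)

lemma mult_munit_left:
  "q < n i \<Longrightarrow> vmult n (munit i p q) y i' j l = (if i' = i \<and> j = p then y i q l else 0)"
proof -
  assume q: "q < n i"
  have "\<And>m. (if i' = i \<and> j = p \<and> m = q then 1 else 0) * y i' m l
     = (if m = q then (if i' = i \<and> j = p then y i q l else 0) else 0)" by auto
  then show ?thesis using q by (simp add: vmult_def munit_def)
qed


lemma cproj_left:
  "vmult n (vscal c (cproj n i)) y i' j l = (if i' = i \<and> j < n i then c * y i j l else 0)"
proof -
  have "\<And>m. c * (if i' = i \<and> j = m \<and> j < n i' then 1 else 0) * y i' m l
     = (if m = j then (if i' = i \<and> j < n i then c * y i j l else 0) else 0)" by auto
  note H = this
  show ?thesis unfolding vmult_def vscal_def cproj_def H by simp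
qed

lemma cproj_right:
  "vmult n y (vscal c (cproj n i)) i' j l = (if i' = i \<and> l < n i then c * y i j l else 0)"
proof -
  have "\<And>m. y i' j m * (c * (if i' = i \<and> m = l \<and> m < n i' then 1 else 0))
     = (if m = l then (if i' = i \<and> l < n i then c * y i j l else 0) else 0)" by auto
  note H = this
  show ?thesis unfolding vmult_def vscal_def cproj_def H by simp
qed

lemma central:
  assumes "y \<in> vna k n"
  shows "vmult n (vscal c (cproj n i)) y = vmult n y (vscal c (cproj n i))"
proof (rule ext, rule ext, rule ext)
  fix i' j l
  show "vmult n (vscal c (cproj n i)) y i' j l = vmult n y (vscal c (cproj n i)) i' j l"
    unfolding cproj_left cproj_right using vna_out[OF assms] by (auto simp: mult.commute)
qed

lemma vadd_cancel: "vadd A B = vadd C B \<Longrightarrow> A = C"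
proof (rule ext, rule ext, rule ext)
  fix i j l assume "vadd A B = vadd C B"
  then have "vadd A B i j l = vadd C B i j l" by simp
  then show "A i j l = C i j l" by (simp add: vadd_def)
qed

lemma vadd_cancel2: "vadd A B = vadd B C \<Longrightarrow> A = C"
proof (rule ext, rule ext, rule ext)
  fix i j l assume "vadd A B = vadd B C"
  then have "vadd A B i j l = vadd B C i j l" by simp
  then show "A i j l = C i j l" by (simp add: vadd_def)
qed

context
  fixes k :: nat and n :: "nat \<Rightarrow> nat" and D :: "fdvn \<Rightarrow> fdvn"
  assumes der: "is_add_der k n D"
begin

lemma Dv: "x \<in> vna k n \<Longrightarrow> D x \<in> vna k n"
  using der by (simp add: is_add_der_def)

lemma Dadd: "x \<in> vna k n \<Longrightarrow> y \<in> vna k n \<Longrightarrow> D (vadd x y) = vadd (D x) (D y)"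
  using der by (simp add: is_add_der_def)

lemma Dmul: "x \<in> vna k n \<Longrightarrow> y \<in> vna k n \<Longrightarrow>
   D (vmult n x y) = vadd (vmult n (D x) y) (vmult n x (D y))"
  using der by (simp add: is_add_der_def)

lemma D0: "D (\<lambda>i j l. 0) = (\<lambda>i j l. 0)"
proof (rule ext, rule ext, rule ext)
  fix i j l
  have "vadd (\<lambda>i j l. 0) (\<lambda>i j l. 0) = (\<lambda>i j l. 0 :: complex)" by (simp add: vadd_def)
  then have "D (\<lambda>i j l. 0) = vadd (D (\<lambda>i j l. 0)) (D (\<lambda>i j l. 0))"
    using Dadd[OF zero_vna zero_vna] by simp
  then have "D (\<lambda>i j l. 0) i j l = D (\<lambda>i j l. 0) i j l + D (\<lambda>i j l. 0) i j l"
    by (simp add: vadd_def fun_eq_iff)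
  then show "D (\<lambda>i j l. 0) i j l = 0" by simp
qed

lemma sum_vna: "(\<forall>m<N. f m \<in> vna k n) \<Longrightarrow> (\<lambda>i j l. \<Sum>m<N. f m i j l) \<in> vna k n"
  by (auto simp: vna_def)

lemma Dsum: "(\<forall>m<(N::nat). f m \<in> vna k n) \<Longrightarrow>
   D (\<lambda>i j l. \<Sum>m<N. f m i j l) = (\<lambda>i j l. \<Sum>m<N. D (f m) i j l)"
proof (induction N)
  case 0
  then show ?case using D0 by simp
next
  case (Suc N)
  have e: "(\<lambda>i j l. \<Sum>m<Suc N. f m i j l) = vadd (\<lambda>i j l. \<Sum>m<N. f m i j l) (f N)"
    by (simp add: vadd_def)
  have IH: "D (\<lambda>i j l. \<Sum>m<N. f m i j l) = (\<lambda>i j l. \<Sum>m<N. D (f m) i j l)"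
    using Suc by simp
  have "D (vadd (\<lambda>i j l. \<Sum>m<N. f m i j l) (f N))
      = vadd (D (\<lambda>i j l. \<Sum>m<N. f m i j l)) (D (f N))"
    using Suc.prems sum_vna[of N f] by (intro Dadd) auto
  then show ?case unfolding e IH by (simp add: vadd_def)
qed

lemma Dcent_exists:
  assumes ik: "i < k" and ni: "0 < n i"
  shows "\<exists>d. D (vscal c (cproj n i)) = vscal d (cproj n i)"
proof -
  define w where "w = vscal c (cproj n i)"
  define W where "W = D w"
  have wv: "w \<in> vna k n" unfolding w_def by (intro vscal_vna cproj_vna ik)
  have Wv: "W \<in> vna k n" unfolding W_def by (rule Dv[OF wv])
  have zv: "cproj n i \<in> vna k n" by (rule cproj_vna[OF ik])
  have z1: "cproj n i = vscal 1 (cproj n i)" by (simp add: vscal_def)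
  have zw: "vmult n (cproj n i) w = w"
  proof (rule ext, rule ext, rule ext)
    fix i' j l
    show "vmult n (cproj n i) w i' j l = w i' j l"
      using cproj_left[of n 1 i w i' j l] vna_out[OF wv, of i' j l] z1
      by (auto simp: w_def vscal_def cproj_def)
  qed
  have blk: "W i' j l = 0" if "i' \<noteq> i" for i' j l
  proof -
    have "W = D (vmult n (cproj n i) w)" using zw W_def by simp
    also have "\<dots> = vadd (vmult n (D (cproj n i)) w) (vmult n (cproj n i) W)"
      unfolding W_def by (rule Dmul[OF zv wv])
    finally have "W i' j l = vadd (vmult n (D (cproj n i)) w) (vmult n (cproj n i) W) i' j l"
      by simp
    then show ?thesis using that by (simp add: vadd_def vmult_def w_def vscal_def cproj_def)
  qed
  have comm: "vmult n W (munit i p q) = vmult n (munit i p q) W"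
    if p: "p < n i" and q: "q < n i" for p q
  proof -
    have Ev: "munit i p q \<in> vna k n" using ik p q by (rule munit_vna)
    have DEv: "D (munit i p q) \<in> vna k n" by (rule Dv[OF Ev])
    have c1: "vmult n w (munit i p q) = vmult n (munit i p q) w"
      unfolding w_def by (rule central[OF Ev])
    have c2: "vmult n w (D (munit i p q)) = vmult n (D (munit i p q)) w"
      unfolding w_def by (rule central[OF DEv])
    have "vadd (vmult n W (munit i p q)) (vmult n w (D (munit i p q)))
        = vadd (vmult n (D (munit i p q)) w) (vmult n (munit i p q) W)"
      using Dmul[OF wv Ev] Dmul[OF Ev wv] c1 unfolding W_def by simp
    then have "vadd (vmult n W (munit i p q)) (vmult n w (D (munit i p q)))
        = vadd (vmult n w (D (munit i p q))) (vmult n (munit i p q) W)"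
      using c2 by simp
    then show ?thesis by (rule vadd_cancel2)
  qed
  have ent: "W i j p = (if j = p then W i q q else 0)" if p: "p < n i" and q: "q < n i" for j p q
  proof -
    have "vmult n W (munit i p q) i j q = vmult n (munit i p q) W i j q"
      using comm[OF p q] by simp
    then show ?thesis unfolding mult_munit_right[of p n i W, OF p] mult_munit_left[of q n i p W, OF q] by simp
  qed
  have "W = vscal (W i 0 0) (cproj n i)"
  proof (rule ext, rule ext, rule ext)
    fix i' j l
    show "W i' j l = vscal (W i 0 0) (cproj n i) i' j l"
    proof (cases "i' = i")
      case True
      show ?thesis
      proof (cases "j < n i \<and> l < n i")
        case True
        then show ?thesis using ent[of l 0 j] ni \<open>i' = i\<close> by (simp add: vscal_def cproj_def)
      next
        case False
        then show ?thesis using vna_out[OF Wv, of i' j l] \<open>i' = i\<close> by (auto simp: vscal_def cproj_def)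
      qed
    next
      case False
      then show ?thesis using blk by (simp add: vscal_def cproj_def)
    qed
  qed
  then show ?thesis unfolding W_def w_def by blast
qed

lemma Dcent:
  assumes ik: "i < k" and ni: "0 < n i"
  shows "D (vscal c (cproj n i)) = vscal (delta_i n D i c) (cproj n i)"
proof -
  obtain d where d: "D (vscal c (cproj n i)) = vscal d (cproj n i)"
    using Dcent_exists[OF ik ni] by blast
  have "delta_i n D i c = d"
    unfolding delta_i_def
  proof (rule the_equality)
    show "D (vscal c (cproj n i)) = vscal d (cproj n i)" by (rule d)
  next
    fix d' assume "D (vscal c (cproj n i)) = vscal d' (cproj n i)"
    then have "vscal d' (cproj n i) i 0 0 = vscal d (cproj n i) i 0 0" using d by simp
    then show "d' = d" using ni by (simp add: vscal_def cproj_def)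
  qed
  then show ?thesis using d by simp
qed

lemma Dscal_unit:
  assumes ik: "i < k" and ni: "0 < n i" and m: "m < n i" and p: "p < n i"
  shows "D (vscal c (munit i m 0)) i p 0
         = (if p = m then delta_i n D i c else 0) + c * D (munit i m 0) i p 0"
proof -
  have Ev: "munit i m 0 \<in> vna k n" using ik m ni by (rule munit_vna)
  have zv: "vscal c (cproj n i) \<in> vna k n" by (intro vscal_vna cproj_vna ik)
  have e: "vscal c (munit i m 0) = vmult n (vscal c (cproj n i)) (munit i m 0)"
  proof (rule ext, rule ext, rule ext)
    fix i' j l
    show "vscal c (munit i m 0) i' j l = vmult n (vscal c (cproj n i)) (munit i m 0) i' j l"
      unfolding cproj_left using m by (auto simp: vscal_def munit_def)
  qed
  have "D (vscal c (munit i m 0)) = vadd (vmult n (vscal (delta_i n D i c) (cproj n i)) (munit i m 0))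
       (vmult n (vscal c (cproj n i)) (D (munit i m 0)))"
    unfolding e Dmul[OF zv Ev] Dcent[OF ik ni] ..
  then show ?thesis using p by (simp add: vadd_def cproj_left munit_def)
qed

lemma D_entry:
  assumes xv: "x \<in> vna k n" and ik: "i < k" and ni: "0 < n i" and p: "p < n i" and q: "q < n i"
  shows "D x i p q = delta_i n D i (x i p q)
     + ((\<Sum>m<n i. D (munit i m 0) i p 0 * x i m q) - (\<Sum>m<n i. x i p m * D (munit i q 0) i m 0))"
proof -
  define y where "y = vmult n x (munit i q 0)"
  have Eq: "munit i q 0 \<in> vna k n" using ik q ni by (rule munit_vna)
  have fv: "\<forall>m<n i. vscal (x i m q) (munit i m 0) \<in> vna k n"
    using ik ni by (auto intro!: vscal_vna munit_vna)
  have ye: "y = (\<lambda>i' j l. \<Sum>m<n i. vscal (x i m q) (munit i m 0) i' j l)"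
  proof (rule ext, rule ext, rule ext)
    fix i' j l
    have H: "\<And>m. vscal (x i m q) (munit i m 0) i' j l
       = (if m = j then (if i' = i \<and> l = 0 then x i j q else 0) else 0)"
      by (auto simp: vscal_def munit_def)
    show "y i' j l = (\<Sum>m<n i. vscal (x i m q) (munit i m 0) i' j l)"
      unfolding H y_def mult_munit_right[of q n i x, OF q]
      using vna_out[OF xv, of i j q] by auto
  qed
  have "D y i p 0 = (\<Sum>m<n i. D (vscal (x i m q) (munit i m 0)) i p 0)"
    unfolding ye Dsum[OF fv] by simp
  also have "\<dots> = (\<Sum>m<n i. (if p = m then delta_i n D i (x i m q) else 0)
        + x i m q * D (munit i m 0) i p 0)"
    by (rule sum.cong[OF refl], rule Dscal_unit[OF ik ni _ p]) simp
  also have "\<dots> = delta_i n D i (x i p q) + (\<Sum>m<n i. x i m q * D (munit i m 0) i p 0)"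
    using p by (simp add: sum.distrib)
  finally have 1: "D y i p 0 = delta_i n D i (x i p q) + (\<Sum>m<n i. x i m q * D (munit i m 0) i p 0)" .
  have "D y = vadd (vmult n (D x) (munit i q 0)) (vmult n x (D (munit i q 0)))"
    unfolding y_def by (rule Dmul[OF xv Eq])
  moreover have "vmult n (D x) (munit i q 0) i p 0 = D x i p q"
    by (simp add: mult_munit_right[of q n i "D x", OF q])
  ultimately have 2: "D y i p 0 = D x i p q + (\<Sum>m<n i. x i p m * D (munit i q 0) i m 0)"
    by (simp add: vadd_def vmult_def)
  show ?thesis using 1 2 by (simp add: algebra_simps)
qed

end

theorem lemma3p1:
  fixes k :: nat and n :: "nat \<Rightarrow> nat" and D :: "fdvn \<Rightarrow> fdvn"
  assumes "\<forall>i<k. 0 < n i"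
    and "is_add_der k n D"
  shows "\<exists>a\<in>vna k n.
           (\<forall>x\<in>vna k n. D x = vadd (inner_der n a x) (D_delta k n D x)) \<and>
           (\<forall>b\<in>vna k n. \<forall>g. (\<forall>i<k. is_cder (g i)) \<and>
               (\<forall>x\<in>vna k n. D x = vadd (inner_der n b x) (D_gam k n g x))
             \<longrightarrow> (\<forall>i<k. g i = delta_i n D i) \<and>
                 (\<forall>x\<in>vna k n. inner_der n b x = inner_der n a x))"
proof -
  note pos = assms(1) and der = assms(2)
  define a where "a = (\<lambda>i p q. if i < k \<and> p < n i \<and> q < n i then D (munit i q 0) i p 0 else 0)"
  have av: "a \<in> vna k n" by (auto simp: a_def vna_def)
  have dec: "D x = vadd (inner_der n a x) (D_delta k n D x)" if xv: "x \<in> vna k n" for x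
  proof (rule ext, rule ext, rule ext)
    fix i p q
    show "D x i p q = vadd (inner_der n a x) (D_delta k n D x) i p q"
    proof (cases "i < k \<and> p < n i \<and> q < n i")
      case True
      then have ik: "i < k" and p: "p < n i" and q: "q < n i" by auto
      have ni: "0 < n i" using pos ik by auto
      have s1: "(\<Sum>m<n i. a i p m * x i m q) = (\<Sum>m<n i. D (munit i m 0) i p 0 * x i m q)"
        by (rule sum.cong) (use ik p in \<open>auto simp: a_def\<close>)
      have s2: "(\<Sum>m<n i. x i p m * a i m q) = (\<Sum>m<n i. x i p m * D (munit i q 0) i m 0)"
        by (rule sum.cong) (use ik q in \<open>auto simp: a_def\<close>)
      show ?thesis
        unfolding D_entry[OF der xv ik ni p q]
        using True s1 s2
        by (simp add: vadd_def inner_der_def vmult_def D_delta_def D_gam_def)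
    next
      case False
      have z1: "vmult n a x i p q = 0" unfolding vmult_def
        by (rule sum.neutral) (use False vna_out[OF av] vna_out[OF xv] in auto)
      have z2: "vmult n x a i p q = 0" unfolding vmult_def
        by (rule sum.neutral) (use False vna_out[OF av] vna_out[OF xv] in auto)
      show ?thesis using False z1 z2 vna_out[OF Dv[OF der xv] False]
        by (auto simp: vadd_def inner_der_def D_delta_def D_gam_def)
    qed
  qed
  have uniq: "(\<forall>i<k. g i = delta_i n D i) \<and> (\<forall>x\<in>vna k n. inner_der n b x = inner_der n a x)"
    if bv: "b \<in> vna k n" and hyp: "\<forall>x\<in>vna k n. D x = vadd (inner_der n b x) (D_gam k n g x)"
    for b g
  proof -
    have gi: "g i = delta_i n D i" if ik: "i < k" for i
    proof
      fix c
      have ni: "0 < n i" using pos ik by auto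
      define w where "w = vscal c (cproj n i)"
      have wv: "w \<in> vna k n" unfolding w_def by (intro vscal_vna cproj_vna ik)
      have "vmult n w b = vmult n b w" unfolding w_def by (rule central[OF bv])
      then have "inner_der n b w i 0 0 = 0" by (simp add: inner_der_def)
      moreover have "D w i 0 0 = vadd (inner_der n b w) (D_gam k n g w) i 0 0"
        using hyp wv by simp
      ultimately have "D w i 0 0 = g i c"
        using ik ni by (simp add: vadd_def D_gam_def w_def vscal_def cproj_def)
      moreover have "D w i 0 0 = delta_i n D i c"
        unfolding w_def Dcent[OF der ik ni] using ni by (simp add: vscal_def cproj_def)
      ultimately show "g i c = delta_i n D i c" by simp
    qed
    have "D_gam k n g = D_delta k n D"
      unfolding D_delta_def D_gam_def using gi by (auto simp: fun_eq_iff)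
    then have "inner_der n b x = inner_der n a x" if "x \<in> vna k n" for x
      using hyp dec that by (metis vadd_cancel)
    then show ?thesis using gi by blast
  qed
  show ?thesis using av dec uniq by blast
qed

end
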